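(* Let $G=(G_1,v_1,e_1)\Delta(G_2,v_2,e_2)$ be a Hajós join of two hypergraphs $G_1$ and $G_2$, and let $k\ge2$ be an integer. Then: (a) if both $G_1$ and $G_2$ are $(k+1)$-critical, then $G$ is $(k+1)$-critical; (b) if $G$ is $(k+1)$-critical and $k\ge3$, then both $G_1$ and $G_2$ are $(k+1)$-critical.
   Context: A hypergraph is a pair $G=(V,E)$ of finite sets with $E\subseteq 2^V$ and $|e|\ge2$ for all $e\in E$. A coloring requires every edge to contain two vertices of different colors; $\chi$ is the chromatic number. $G$ is $(k+1)$-critical if $\chi(G)=k+1$ but $\chi(H)\le k$ for every proper subhypergraph $H$. Hajós join $(G_1,v_1,e_1)\Delta(G_2,v_2,e_2)$: for vertex-disjoint hypergraphs $G_1,G_2$, $e_i\in E(G_i)$, $v_i\in e_i$, delete $e_1,e_2$, identify $v_1,v_2$ into a new vertex $v^*$, and add a new edge $e^*$ equal either to $(e_1\cup e_2)\setminus\{v_1,v_2\}$ or to $((e_1\cup e_2)\setminus\{v_1,v_2\})\cup\{v^*\}$. *)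

theory Defs
  imports Main
begin

definition hypergraph :: "'a set \<Rightarrow> 'a set set \<Rightarrow> bool" where
  "hypergraph V E \<longleftrightarrow> finite V \<and> E \<subseteq> Pow V \<and> (\<forall>e\<in>E. card e \<ge> 2)"

definition colorable :: "'a set \<Rightarrow> 'a set set \<Rightarrow> nat \<Rightarrow> bool" where
  "colorable V E k \<longleftrightarrow> (\<exists>f :: 'a \<Rightarrow> nat. (\<forall>v\<in>V. f v < k) \<and>
      (\<forall>e\<in>E. \<exists>u\<in>e. \<exists>w\<in>e. f u \<noteq> f w))"

definition chi :: "'a set \<Rightarrow> 'a set set \<Rightarrow> nat" where
  "chi V E = (LEAST k. colorable V E k)"

definition subhypergraph :: "'a set \<Rightarrow> 'a set set \<Rightarrow> 'a set \<Rightarrow> 'a set set \<Rightarrow> bool" where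
  "subhypergraph V' E' V E \<longleftrightarrow> hypergraph V' E' \<and> V' \<subseteq> V \<and> E' \<subseteq> E"

definition critical :: "nat \<Rightarrow> 'a set \<Rightarrow> 'a set set \<Rightarrow> bool" where
  "critical m V E \<longleftrightarrow> hypergraph V E \<and> chi V E = m \<and>
     (\<forall>V' E'. subhypergraph V' E' V E \<and> (V', E') \<noteq> (V, E) \<longrightarrow> chi V' E' < m)"

text \<open>Hajos join. The identified vertex is vs (required to be new, i.e. outside
  (V1-{v1}) \<union> (V2-{v2})); the flag b chooses whether vs is added to the new edge.\<close>
definition hajos_merge :: "'a \<Rightarrow> 'a \<Rightarrow> 'a \<Rightarrow> 'a \<Rightarrow> 'a" where
  "hajos_merge v1 v2 vs x = (if x = v1 \<or> x = v2 then vs else x)"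

definition hajos_join ::
  "'a set \<Rightarrow> 'a set set \<Rightarrow> 'a \<Rightarrow> 'a set \<Rightarrow> 'a set \<Rightarrow> 'a set set \<Rightarrow> 'a \<Rightarrow> 'a set
   \<Rightarrow> 'a \<Rightarrow> bool \<Rightarrow> 'a set \<times> 'a set set" where
  "hajos_join V1 E1 v1 e1 V2 E2 v2 e2 vs b =
    (((V1 \<union> V2) - {v1, v2}) \<union> {vs},
     (image (hajos_merge v1 v2 vs) ` ((E1 - {e1}) \<union> (E2 - {e2})))
     \<union> {((e1 \<union> e2) - {v1, v2}) \<union> (if b then {vs} else {})})"

end

theory Submission
  imports Defs
begin


definition nm :: "('a \<Rightarrow> nat) \<Rightarrow> 'a set \<Rightarrow> bool" where
  "nm f e \<longleftrightarrow> (\<exists>u\<in>e. \<exists>w\<in>e. f u \<noteq> f w)"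

definition cf :: "('a \<Rightarrow> nat) \<Rightarrow> 'a set \<Rightarrow> 'a set set \<Rightarrow> nat \<Rightarrow> bool" where
  "cf f V E k \<longleftrightarrow> (\<forall>v\<in>V. f v < k) \<and> (\<forall>e\<in>E. nm f e)"

lemma colorable_cf: "colorable V E k \<longleftrightarrow> (\<exists>f. cf f V E k)"
  unfolding colorable_def cf_def nm_def by blast

lemma cf_mono: "cf f V E k \<Longrightarrow> V' \<subseteq> V \<Longrightarrow> E' \<subseteq> E \<Longrightarrow> k \<le> k' \<Longrightarrow> cf f V' E' k'"
  unfolding cf_def by fastforce

lemma colorable_mono: "colorable V E k \<Longrightarrow> V' \<subseteq> V \<Longrightarrow> E' \<subseteq> E \<Longrightarrow> k \<le> k' \<Longrightarrow> colorable V' E' k'"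
  using cf_mono colorable_cf by metis

lemma two_elems: assumes "card e \<ge> 2" "u \<in> e" shows "\<exists>w\<in>e. w \<noteq> u"
proof (rule ccontr)
  assume "\<not> ?thesis"
  then have "e \<subseteq> {u}" by auto
  then have "card e \<le> 1" using card_mono[of "{u}" e] by auto
  then show False using assms by auto
qed

lemma nonempty2: "card e \<ge> 2 \<Longrightarrow> \<exists>u. u \<in> e"
  by (cases "e = {}") auto

lemma hyp_colorable: assumes "hypergraph V E" shows "colorable V E (card V)"
proof -
  from assms have fin: "finite V" unfolding hypergraph_def by auto
  then obtain h where h: "bij_betw h V {0..<card V}" using ex_bij_betw_finite_nat by blast
  have "cf h V E (card V)" unfolding cf_def
  proof (intro conjI ballI)
    fix v assume "v \<in> V" then have "h v \<in> {0..<card V}" using bij_betwE[OF h] by blast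
    then show "h v < card V" by simp
  next
    fix e assume e: "e \<in> E"
    then have "e \<subseteq> V" "card e \<ge> 2" using assms unfolding hypergraph_def by auto
    then obtain u where "u \<in> e" using nonempty2 by blast
    then obtain w where "w \<in> e" "u \<noteq> w" using two_elems[OF \<open>card e \<ge> 2\<close> \<open>u \<in> e\<close>] by blast
    have "inj_on h V" using h unfolding bij_betw_def by blast
    then have "h u \<noteq> h w" using \<open>u \<in> e\<close> \<open>w \<in> e\<close> \<open>u \<noteq> w\<close> \<open>e \<subseteq> V\<close> inj_onD by (metis subsetD)
    then show "nm h e" unfolding nm_def using \<open>u \<in> e\<close> \<open>w \<in> e\<close> by blast
  qed
  then show ?thesis using colorable_cf by blast
qed

lemma chi_le: "colorable V E k \<Longrightarrow> chi V E \<le> k"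
  unfolding chi_def by (rule Least_le)

lemma chi_col: assumes "hypergraph V E" shows "colorable V E (chi V E)"
  unfolding chi_def by (rule LeastI[of "colorable V E", OF hyp_colorable[OF assms]])

lemma nm_cong: assumes "nm f e" "\<And>x. x \<in> e \<Longrightarrow> g x = f x" shows "nm g e"
proof -
  obtain u w where "u \<in> e" "w \<in> e" "f u \<noteq> f w" using assms(1) unfolding nm_def by blast
  then have "g u \<noteq> g w" using assms(2) by simp
  then show ?thesis unfolding nm_def using \<open>u \<in> e\<close> \<open>w \<in> e\<close> by blast
qed

lemma crit_iff:
  assumes "k \<ge> 1"
  shows "critical (k+1) V E \<longleftrightarrow> hypergraph V E \<and> \<not> colorable V E k \<and>
     (\<forall>e\<in>E. colorable V (E - {e}) k) \<and> (\<forall>v\<in>V. \<exists>e\<in>E. v \<in> e)"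
proof
  assume c: "critical (k+1) V E"
  then have hyp: "hypergraph V E" and chi: "chi V E = k+1"
    and sub: "\<And>V' E'. subhypergraph V' E' V E \<Longrightarrow> (V', E') \<noteq> (V, E) \<Longrightarrow> chi V' E' < k+1"
    unfolding critical_def by auto
  have nc: "\<not> colorable V E k"
  proof
    assume "colorable V E k"
    then have "chi V E \<le> k" by (rule chi_le)
    then show False using chi by simp
  qed
  have "\<forall>e\<in>E. colorable V (E - {e}) k"
  proof
    fix e assume e: "e \<in> E"
    have h': "hypergraph V (E - {e})" using hyp unfolding hypergraph_def by auto
    have "subhypergraph V (E - {e}) V E" using h' unfolding subhypergraph_def by auto
    then have "chi V (E - {e}) < k+1" using sub e by auto
    then show "colorable V (E - {e}) k" using colorable_mono[OF chi_col[OF h'], of V "E - {e}" k] by simp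
  qed
  moreover have "\<forall>v\<in>V. \<exists>e\<in>E. v \<in> e"
  proof (rule ccontr)
    assume "\<not> (\<forall>v\<in>V. \<exists>e\<in>E. v \<in> e)"
    then obtain v where v: "v \<in> V" "\<forall>e\<in>E. v \<notin> e" by auto
    have h': "hypergraph (V - {v}) E" using hyp v unfolding hypergraph_def by auto
    have "subhypergraph (V - {v}) E V E" using h' unfolding subhypergraph_def by auto
    then have "chi (V - {v}) E < k+1" using sub v by auto
    then have "colorable (V - {v}) E k" using colorable_mono[OF chi_col[OF h'], of "V - {v}" E k] by simp
    then obtain f where f: "cf f (V - {v}) E k" using colorable_cf by blast
    have "cf (f(v := 0)) V E k" unfolding cf_def
    proof (intro conjI ballI)
      fix x assume "x \<in> V" then show "(f(v := 0)) x < k" using f assms unfolding cf_def by auto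
    next
      fix e assume e: "e \<in> E"
      then have nf: "nm f e" "v \<notin> e" using f v unfolding cf_def by auto
      show "nm (f(v := 0)) e" by (rule nm_cong[OF \<open>nm f e\<close>]) (use \<open>v \<notin> e\<close> in auto)
    qed
    then show False using nc colorable_cf by blast
  qed
  ultimately show "hypergraph V E \<and> \<not> colorable V E k \<and>
     (\<forall>e\<in>E. colorable V (E - {e}) k) \<and> (\<forall>v\<in>V. \<exists>e\<in>E. v \<in> e)" using hyp nc by blast
next
  assume a: "hypergraph V E \<and> \<not> colorable V E k \<and>
     (\<forall>e\<in>E. colorable V (E - {e}) k) \<and> (\<forall>v\<in>V. \<exists>e\<in>E. v \<in> e)"
  then have hyp: "hypergraph V E" and nc: "\<not> colorable V E k"
    and del: "\<And>e. e \<in> E \<Longrightarrow> colorable V (E - {e}) k" and cov: "\<And>v. v \<in> V \<Longrightarrow> \<exists>e\<in>E. v \<in> e" by auto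
  have "E \<noteq> {}"
  proof
    assume "E = {}"
    then have "cf (\<lambda>_. 0) V E k" using assms unfolding cf_def by auto
    then show False using nc colorable_cf by blast
  qed
  then obtain e0 where e0: "e0 \<in> E" by auto
  then have "e0 \<subseteq> V" "card e0 \<ge> 2" using hyp unfolding hypergraph_def by auto
  then obtain u where u: "u \<in> e0" using nonempty2 by blast
  obtain f where f: "cf f V (E - {e0}) k" using del[OF e0] colorable_cf by blast
  have "cf (f(u := k)) V E (k+1)" unfolding cf_def
  proof (intro conjI ballI)
    fix v assume "v \<in> V" then show "(f(u := k)) v < k + 1" using f unfolding cf_def by auto
  next
    fix e assume e: "e \<in> E"
    then have eV: "e \<subseteq> V" "card e \<ge> 2" using hyp unfolding hypergraph_def by auto
    show "nm (f(u := k)) e"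
    proof (cases "u \<in> e")
      case True
      then obtain w where "w \<in> e" "w \<noteq> u" using two_elems[OF eV(2) True] by blast
      then have "f w < k" using f eV unfolding cf_def by auto
      then have "(f(u := k)) u \<noteq> (f(u := k)) w" using \<open>w \<noteq> u\<close> by simp
      then show ?thesis unfolding nm_def using True \<open>w \<in> e\<close> by blast
    next
      case False
      then have "e \<noteq> e0" using u by auto
      then have nf: "nm f e" using f e unfolding cf_def by auto
      show ?thesis by (rule nm_cong[OF nf]) (use False in auto)
    qed
  qed
  then have ck1: "colorable V E (k+1)" using colorable_cf by blast
  have chi: "chi V E = k+1"
    unfolding chi_def
  proof (rule Least_equality)
    show "colorable V E (k+1)" by (rule ck1)
  next
    fix y assume "colorable V E y"
    show "k + 1 \<le> y"
    proof (rule ccontr)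
      assume "\<not> k + 1 \<le> y"
      then have "y \<le> k" by simp
      then have "colorable V E k" using colorable_mono[OF \<open>colorable V E y\<close>, of V E k] by simp
      then show False using nc by blast
    qed
  qed
  have "\<forall>V' E'. subhypergraph V' E' V E \<and> (V', E') \<noteq> (V, E) \<longrightarrow> chi V' E' < k+1"
  proof (intro allI impI)
    fix V' E' assume s: "subhypergraph V' E' V E \<and> (V', E') \<noteq> (V, E)"
    then have VV: "V' \<subseteq> V" "E' \<subseteq> E" "hypergraph V' E'" unfolding subhypergraph_def by auto
    show "chi V' E' < k+1"
    proof (cases "E' = E")
      case True
      then have "V' \<noteq> V" using s by auto
      then obtain v where v: "v \<in> V" "v \<notin> V'" using VV by auto
      then obtain e where "e \<in> E" "v \<in> e" using cov by blast
      then have False using VV(3) True v unfolding hypergraph_def by auto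
      then show ?thesis ..
    next
      case False
      then obtain e where "e \<in> E" "e \<notin> E'" using VV by auto
      then have "E' \<subseteq> E - {e}" using VV by auto
      then have "colorable V' E' k" using colorable_mono[OF del[OF \<open>e \<in> E\<close>] VV(1)] by simp
      then have "chi V' E' \<le> k" by (rule chi_le)
      then show ?thesis by simp
    qed
  qed
  then show "critical (k+1) V E" unfolding critical_def using hyp chi by blast
qed



definition sw :: "nat \<Rightarrow> nat \<Rightarrow> nat \<Rightarrow> nat" where
  "sw a b c = (if c = a then b else if c = b then a else c)"

lemma sw_inj: "sw a b x = sw a b y \<Longrightarrow> x = y"
  unfolding sw_def by (auto split: if_splits)

lemma sw_lt: "a < k \<Longrightarrow> b < k \<Longrightarrow> c < k \<Longrightarrow> sw a b c < k"
  unfolding sw_def by auto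

lemma cf_sw: assumes "cf f V E k" "a < k" "b < k" shows "cf (sw a b \<circ> f) V E k"
  unfolding cf_def
proof (intro conjI ballI)
  fix v assume "v \<in> V" then show "(sw a b \<circ> f) v < k" using assms sw_lt unfolding cf_def by simp
next
  fix e assume "e \<in> E"
  then obtain u w where uw: "u \<in> e" "w \<in> e" "f u \<noteq> f w" using assms unfolding cf_def nm_def by blast
  then have "(sw a b \<circ> f) u \<noteq> (sw a b \<circ> f) w" using sw_inj by (auto simp del: sw_def)
  then show "nm (sw a b \<circ> f) e" unfolding nm_def using uw by blast
qed

lemma merge_sym: "hajos_merge v2 v1 vs = hajos_merge v1 v2 vs"
  unfolding hajos_merge_def by auto

lemma hajos_join_sym:
  "hajos_join V2 E2 v2 e2 V1 E1 v1 e1 vs b = hajos_join V1 E1 v1 e1 V2 E2 v2 e2 vs b"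
proof -
  have a: "V2 \<union> V1 = V1 \<union> V2" "{v2, v1} = {v1, v2}" "e2 \<union> e1 = e1 \<union> e2" by (rule Un_commute, rule insert_commute, rule Un_commute)
  have b: "(E2 - {e2}) \<union> (E1 - {e1}) = (E1 - {e1}) \<union> (E2 - {e2})" by (rule Un_commute)
  show ?thesis unfolding hajos_join_def merge_sym[of v2 v1 vs] by (simp only: a b)
qed

lemma mono_of_not_nm: assumes "\<not> nm f e" "u \<in> e" "w \<in> e" shows "f u = f w"
proof (rule ccontr)
  assume "f u \<noteq> f w"
  then have "nm f e" unfolding nm_def using assms(2,3) by blast
  then show False using assms(1) by blast
qed

lemma other_in: assumes "card e \<ge> 2" shows "\<exists>x\<in>e. x \<noteq> v"
proof -
  obtain a where a: "a \<in> e" using nonempty2[OF assms] by blast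
  show ?thesis
  proof (cases "a = v")
    case True then show ?thesis using two_elems[OF assms a] by blast
  next
    case False then show ?thesis using a by blast
  qed
qed

locale hj =
  fixes V1 :: "'a set" and E1 :: "'a set set" and v1 :: 'a and e1 :: "'a set"
    and V2 :: "'a set" and E2 :: "'a set set" and v2 :: 'a and e2 :: "'a set"
    and vs :: 'a and b :: bool and V :: "'a set" and E :: "'a set set"
  assumes h1: "hypergraph V1 E1" and h2: "hypergraph V2 E2" and disj: "V1 \<inter> V2 = {}"
    and e1: "e1 \<in> E1" and v1e1: "v1 \<in> e1" and e2: "e2 \<in> E2" and v2e2: "v2 \<in> e2"
    and vsn: "vs \<notin> (V1 - {v1}) \<union> (V2 - {v2})"
    and VE: "(V, E) = hajos_join V1 E1 v1 e1 V2 E2 v2 e2 vs b"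
begin

abbreviation "m \<equiv> hajos_merge v1 v2 vs"

lemma ms: "hajos_merge v2 v1 vs = hajos_merge v1 v2 vs" by (rule merge_sym)
abbreviation "es \<equiv> ((e1 \<union> e2) - {v1, v2}) \<union> (if b then {vs} else {})"

lemma V_eq: "V = ((V1 \<union> V2) - {v1, v2}) \<union> {vs}"
  using VE unfolding hajos_join_def by auto

lemma E_eq: "E = (image m ` (E1 - {e1})) \<union> (image m ` (E2 - {e2})) \<union> {es}"
  using VE unfolding hajos_join_def by auto

lemma sym: "hj V2 E2 v2 e2 V1 E1 v1 e1 vs b V E"
proof
  show "(V, E) = hajos_join V2 E2 v2 e2 V1 E1 v1 e1 vs b"
    using VE hajos_join_sym[of V1 E1 v1 e1 V2 E2 v2 e2 vs b] by simp
qed (use h1 h2 disj e1 v1e1 e2 v2e2 vsn in auto)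

lemma e1V1: "e1 \<subseteq> V1" using h1 e1 unfolding hypergraph_def by auto
lemma e2V2: "e2 \<subseteq> V2" using h2 e2 unfolding hypergraph_def by auto
lemma v1V1: "v1 \<in> V1" using e1V1 v1e1 by auto
lemma v2V2: "v2 \<in> V2" using e2V2 v2e2 by auto
lemma v2nV1: "v2 \<notin> V1" using disj v2V2 by auto
lemma v1nV2: "v1 \<notin> V2" using disj v1V1 by auto

lemma m1: "x \<in> V1 \<Longrightarrow> m x = (if x = v1 then vs else x)"
  unfolding hajos_merge_def using v2nV1 by auto
lemma m2: "x \<in> V2 \<Longrightarrow> m x = (if x = v2 then vs else x)"
  unfolding hajos_merge_def using v1nV2 by auto

lemma mV1: "x \<in> V1 \<Longrightarrow> m x \<in> V" using m1 V_eq v2nV1 by auto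

lemma inj_m: "inj_on m V1"
  unfolding inj_on_def
proof (intro ballI impI)
  fix x y assume xy: "x \<in> V1" "y \<in> V1" "m x = m y"
  then show "x = y" using m1[OF xy(1)] m1[OF xy(2)] vsn by (auto split: if_splits)
qed

lemma edge1: "e \<in> E1 \<Longrightarrow> e \<subseteq> V1 \<and> card e \<ge> 2" using h1 unfolding hypergraph_def by auto
lemma edge2: "e \<in> E2 \<Longrightarrow> e \<subseteq> V2 \<and> card e \<ge> 2" using h2 unfolding hypergraph_def by auto

lemma ex_other1: "\<exists>x\<in>e1. x \<noteq> v1" using two_elems[OF conjunct2[OF edge1[OF e1]] v1e1] by blast
lemma ex_other2: "\<exists>x\<in>e2. x \<noteq> v2" using two_elems[OF conjunct2[OF edge2[OF e2]] v2e2] by blast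

lemma es_not1: "es \<notin> image m ` (E1 - {e1})"
proof
  assume "es \<in> image m ` (E1 - {e1})"
  then obtain e where e: "e \<in> E1" "es = m ` e" by auto
  obtain y where y: "y \<in> e2" "y \<noteq> v2" using ex_other2 by blast
  then have "y \<in> es" using v1nV2 e2V2 by auto
  then obtain x where "x \<in> e" "m x = y" using e by auto
  moreover have "x \<in> V1" using edge1 e \<open>x \<in> e\<close> by auto
  ultimately show False using m1 y vsn e2V2 disj by (auto split: if_splits)
qed

lemma hyp_join: "hypergraph V E"
  unfolding hypergraph_def
proof (intro conjI ballI)
  show "finite V" using V_eq h1 h2 unfolding hypergraph_def by auto
next
  show "E \<subseteq> Pow V"
  proof
    fix X assume "X \<in> E"
    then consider (a) e where "e \<in> E1" "X = m ` e" | (c) e where "e \<in> E2" "X = m ` e" | (s) "X = es"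
      using E_eq by auto
    then show "X \<in> Pow V"
    proof cases
      case a then show ?thesis using edge1 mV1 by auto
    next
      case c then show ?thesis using edge2 hj.mV1[OF sym] ms by fastforce
    next
      case s then show ?thesis using V_eq e1V1 e2V2 by auto
    qed
  qed
next
  fix X assume "X \<in> E"
  then consider (a) e where "e \<in> E1" "X = m ` e" | (c) e where "e \<in> E2" "X = m ` e" | (s) "X = es"
    using E_eq by auto
  then show "card X \<ge> 2"
  proof cases
    case a
    then have "card (m ` e) = card e" using card_image inj_on_subset[OF inj_m] edge1 by blast
    then show ?thesis using a edge1 by simp
  next
    case c
    then have "card (hajos_merge v2 v1 vs ` e) = card e"
      using card_image inj_on_subset[OF hj.inj_m[OF sym]] hj.edge1[OF sym] by blast
    then show ?thesis using c edge2 ms by simp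
  next
    case s
    obtain x where x: "x \<in> e1" "x \<noteq> v1" using ex_other1 by blast
    obtain y where y: "y \<in> e2" "y \<noteq> v2" using ex_other2 by blast
    have xy: "x \<in> X" "y \<in> X" "x \<noteq> y" using x y s e1V1 e2V2 v1nV2 v2nV1 disj by auto
    have "finite X" using s h1 h2 e1V1 e2V2 unfolding hypergraph_def by (auto intro: finite_subset)
    then have "card {x, y} \<le> card X" using xy by (intro card_mono) auto
    then show ?thesis using xy by auto
  qed
qed



lemma nm_other: assumes "nm f e" "v \<in> e" shows "\<exists>x\<in>e. x \<noteq> v \<and> f x \<noteq> f v"
proof -
  obtain u w where uw: "u \<in> e" "w \<in> e" "f u \<noteq> f w" using assms(1) unfolding nm_def by blast
  show ?thesis
  proof (cases "f u = f v")
    case True then show ?thesis using uw by (intro bexI[of _ w]) auto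
  next
    case False then show ?thesis using uw by (intro bexI[of _ u]) auto
  qed
qed

lemma nm_img: "nm (f \<circ> m) e \<Longrightarrow> nm f (m ` e)"
  unfolding nm_def by auto

lemma comb:
  assumes g: "cf g V1 F1 k" and f: "cf f2 V2 F2 k" and al: "f2 v2 = g v1"
    and F1: "F1 \<subseteq> E1" and F2: "F2 \<subseteq> E2"
  obtains f where "\<forall>x\<in>V. f x < k" "\<forall>e\<in>F1. nm f (m ` e)" "\<forall>e\<in>F2. nm f (m ` e)"
     "(\<exists>x\<in>e1-{v1}. \<exists>y\<in>e2-{v2}. g x \<noteq> f2 y) \<longrightarrow> nm f es"
proof -
  define f where "f = (\<lambda>x. if x \<in> V1 - {v1} then g x else if x \<in> V2 - {v2} then f2 x else g v1)"
  have fm1: "f (m x) = g x" if "x \<in> V1" for x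
    using that m1 vsn unfolding f_def by auto
  have fm2: "f (m x) = f2 x" if "x \<in> V2" for x
    using that m2 vsn al disj unfolding f_def by auto
  have "\<forall>x\<in>V. f x < k"
    using g f v1V1 V_eq unfolding cf_def f_def by auto
  moreover have "\<forall>e\<in>F1. nm f (m ` e)"
  proof
    fix e assume e: "e \<in> F1"
    then have "nm g e" "e \<subseteq> V1" using g F1 edge1 unfolding cf_def by auto
    then have "nm (f \<circ> m) e" using nm_cong[of g e "f \<circ> m"] fm1 by auto
    then show "nm f (m ` e)" by (rule nm_img)
  qed
  moreover have "\<forall>e\<in>F2. nm f (m ` e)"
  proof
    fix e assume e: "e \<in> F2"
    then have "nm f2 e" "e \<subseteq> V2" using f F2 edge2 unfolding cf_def by auto
    then have "nm (f \<circ> m) e" using nm_cong[of f2 e "f \<circ> m"] fm2 by auto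
    then show "nm f (m ` e)" by (rule nm_img)
  qed
  moreover have "(\<exists>x\<in>e1-{v1}. \<exists>y\<in>e2-{v2}. g x \<noteq> f2 y) \<longrightarrow> nm f es"
  proof
    assume "\<exists>x\<in>e1-{v1}. \<exists>y\<in>e2-{v2}. g x \<noteq> f2 y"
    then obtain x y where xy: "x \<in> e1" "x \<noteq> v1" "y \<in> e2" "y \<noteq> v2" "g x \<noteq> f2 y" by blast
    have xV: "x \<in> V1" using xy(1) e1V1 by blast
    have yV: "y \<in> V2" using xy(3) e2V2 by blast
    have "x \<noteq> v2" using xV v2nV1 by blast
    then have "x \<in> (e1 \<union> e2) - {v1, v2}" using xy(1,2) by blast
    then have xe: "x \<in> es" by (rule UnI1)
    have "y \<noteq> v1" using yV v1nV2 by blast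
    then have "y \<in> (e1 \<union> e2) - {v1, v2}" using xy(3,4) by blast
    then have ye: "y \<in> es" by (rule UnI1)
    have "x \<in> V1 - {v1}" using xV xy(2) by blast
    then have fx: "f x = g x" unfolding f_def by simp
    have "y \<notin> V1 - {v1}" "y \<in> V2 - {v2}" using yV xy(4) disj by blast+
    then have fy: "f y = f2 y" unfolding f_def by (simp; blast)
    have "f x \<noteq> f y" using fx fy xy(5) by simp
    then show "nm f es" unfolding nm_def using xe ye by blast
  qed
  ultimately show thesis by (rule that)
qed

lemma sw_a: "sw c d c = d" unfolding sw_def by auto

lemma align:
  assumes "cf f2 V2 F2 k" "cf g V1 F1 k"
  shows "cf (sw (f2 v2) (g v1) \<circ> f2) V2 F2 k \<and> (sw (f2 v2) (g v1) \<circ> f2) v2 = g v1"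
proof
  have "f2 v2 < k" using assms(1) v2V2 unfolding cf_def by blast
  moreover have "g v1 < k" using assms(2) v1V1 unfolding cf_def by blast
  ultimately show "cf (sw (f2 v2) (g v1) \<circ> f2) V2 F2 k" using cf_sw[OF assms(1)] by blast
  show "(sw (f2 v2) (g v1) \<circ> f2) v2 = g v1" by (simp add: sw_a)
qed

lemma edge_cases:
  assumes "X \<in> E"
  shows "(\<exists>e\<in>E1-{e1}. X = m ` e) \<or> (\<exists>e\<in>E2-{e2}. X = m ` e) \<or> X = es"
proof -
  have "X \<in> (image m ` (E1 - {e1})) \<union> (image m ` (E2 - {e2})) \<union> {es}" using assms E_eq by simp
  then show ?thesis by blast
qed

lemma cf_from_cases:
  assumes "\<forall>x\<in>V. f x < k"
    and "\<And>X. X \<in> F \<Longrightarrow> X \<in> E"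
    and "\<And>e. e \<in> E1-{e1} \<Longrightarrow> m ` e \<in> F \<Longrightarrow> nm f (m ` e)"
    and "\<And>e. e \<in> E2-{e2} \<Longrightarrow> m ` e \<in> F \<Longrightarrow> nm f (m ` e)"
    and "es \<in> F \<Longrightarrow> nm f es"
  shows "cf f V F k"
  unfolding cf_def
proof (intro conjI ballI)
  fix x assume "x \<in> V" then show "f x < k" using assms(1) by blast
next
  fix X assume X: "X \<in> F"
  from edge_cases[OF assms(2)[OF X]] show "nm f X"
  proof (elim disjE bexE)
    fix e assume "e \<in> E1 - {e1}" "X = m ` e" then show "nm f X" using assms(3) X by blast
  next
    fix e assume "e \<in> E2 - {e2}" "X = m ` e" then show "nm f X" using assms(4) X by blast
  next
    assume "X = es" then show "nm f X" using assms(5) X by blast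
  qed
qed

lemma del_star:
  assumes "colorable V1 (E1 - {e1}) k" "colorable V2 (E2 - {e2}) k"
  shows "colorable V (E - {es}) k"
proof -
  obtain g where g: "cf g V1 (E1 - {e1}) k" using assms colorable_cf by blast
  obtain f2 where f2: "cf f2 V2 (E2 - {e2}) k" using assms colorable_cf by blast
  obtain f where f: "\<forall>x\<in>V. f x < k" "\<forall>e\<in>E1 - {e1}. nm f (m ` e)" "\<forall>e\<in>E2 - {e2}. nm f (m ` e)"
     "(\<exists>x\<in>e1-{v1}. \<exists>y\<in>e2-{v2}. g x \<noteq> (sw (f2 v2) (g v1) \<circ> f2) y) \<longrightarrow> nm f es"
    by (rule comb[OF g conjunct1[OF align[OF f2 g]] conjunct2[OF align[OF f2 g]] Diff_subset Diff_subset])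
  have "cf f V (E - {es}) k" by (rule cf_from_cases) (use f in auto)
  then show ?thesis using colorable_cf by blast
qed

lemma del1:
  assumes e: "e \<in> E1" "e \<noteq> e1" and c1: "colorable V1 (E1 - {e}) k"
    and c2: "colorable V2 (E2 - {e2}) k" and n2: "\<not> colorable V2 E2 k"
  shows "colorable V (E - {m ` e}) k"
proof -
  obtain g where g: "cf g V1 (E1 - {e}) k" using c1 colorable_cf by blast
  obtain f2 where f2: "cf f2 V2 (E2 - {e2}) k" using c2 colorable_cf by blast
  have "e1 \<in> E1 - {e}" using e e1 by blast
  then have "nm g e1" using g unfolding cf_def by blast
  then obtain x where x: "x \<in> e1" "x \<noteq> v1" "g x \<noteq> g v1" using nm_other[OF _ v1e1] by blast
  have "\<not> nm f2 e2"
  proof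
    assume "nm f2 e2"
    then have "cf f2 V2 E2 k" using f2 unfolding cf_def by blast
    then show False using n2 colorable_cf by blast
  qed
  define f2' where "f2' = sw (f2 v2) (g v1) \<circ> f2"
  have a: "cf f2' V2 (E2 - {e2}) k" "f2' v2 = g v1" using align[OF f2 g] unfolding f2'_def by blast+
  obtain y where y: "y \<in> e2" "y \<noteq> v2" using ex_other2 by blast
  have "f2 y = f2 v2" using mono_of_not_nm[OF \<open>\<not> nm f2 e2\<close> y(1) v2e2] .
  then have "f2' y = g v1" unfolding f2'_def by (simp add: sw_a)
  then have "g x \<noteq> f2' y" using x(3) by simp
  then have ex: "\<exists>x\<in>e1-{v1}. \<exists>y\<in>e2-{v2}. g x \<noteq> f2' y" using x(1,2) y by blast
  obtain f where f: "\<forall>x\<in>V. f x < k" "\<forall>e'\<in>E1 - {e}. nm f (m ` e')" "\<forall>e\<in>E2 - {e2}. nm f (m ` e)"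
     "(\<exists>x\<in>e1-{v1}. \<exists>y\<in>e2-{v2}. g x \<noteq> f2' y) \<longrightarrow> nm f es"
    by (rule comb[OF g a(1) a(2) Diff_subset Diff_subset])
  have fes: "nm f es" using f(4) ex by blast
  have "cf f V (E - {m ` e}) k"
  proof (rule cf_from_cases)
    fix e' assume "e' \<in> E1 - {e1}" "m ` e' \<in> E - {m ` e}"
    then have "e' \<in> E1 - {e}" by blast
    then show "nm f (m ` e')" using f(2) by blast
  qed (use f fes in auto)
  then show ?thesis using colorable_cf by blast
qed

lemma v1_other:
  assumes k: "k \<ge> 2" and n1: "\<not> colorable V1 E1 k" and c1: "colorable V1 (E1 - {e1}) k"
  shows "\<exists>e\<in>E1 - {e1}. v1 \<in> e"
proof (rule ccontr)
  assume no: "\<not> (\<exists>e\<in>E1 - {e1}. v1 \<in> e)"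
  obtain g where g: "cf g V1 (E1 - {e1}) k" using c1 colorable_cf by blast
  obtain u where u: "u \<in> e1" "u \<noteq> v1" using ex_other1 by blast
  define c where "c = (if g u = 0 then 1 else (0::nat))"
  have "cf (g(v1 := c)) V1 E1 k" unfolding cf_def
  proof (intro conjI ballI)
    fix x assume "x \<in> V1" then show "(g(v1 := c)) x < k" using g k unfolding cf_def c_def by auto
  next
    fix e assume e: "e \<in> E1"
    show "nm (g(v1 := c)) e"
    proof (cases "e = e1")
      case True
      have "(g(v1 := c)) u \<noteq> (g(v1 := c)) v1" using u unfolding c_def by auto
      then show ?thesis unfolding nm_def using u v1e1 True by blast
    next
      case False
      then have nf: "nm g e" "v1 \<notin> e" using g e no unfolding cf_def by auto
      show ?thesis by (rule nm_cong[OF nf(1)]) (use nf(2) in auto)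
    qed
  qed
  then show False using n1 colorable_cf by blast
qed

lemma es_in: "es \<in> E"
proof -
  have "es \<in> (image m ` (E1 - {e1})) \<union> (image m ` (E2 - {e2})) \<union> {es}" by blast
  then show ?thesis using E_eq by simp
qed

lemma img1_in: assumes "e \<in> E1 - {e1}" shows "m ` e \<in> E"
proof -
  have "m ` e \<in> (image m ` (E1 - {e1})) \<union> (image m ` (E2 - {e2})) \<union> {es}" using assms by blast
  then show ?thesis using E_eq by simp
qed

lemma cover:
  assumes c: "\<forall>v\<in>V1. \<exists>e\<in>E1. v \<in> e" and o: "\<exists>e\<in>E1 - {e1}. v1 \<in> e"
  shows "\<forall>x\<in>V1-{v1}. \<exists>X\<in>E. x \<in> X" and "\<exists>X\<in>E. vs \<in> X"
proof -
  show "\<forall>x\<in>V1-{v1}. \<exists>X\<in>E. x \<in> X"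
  proof
    fix x assume x: "x \<in> V1 - {v1}"
    then obtain e where e: "e \<in> E1" "x \<in> e" using c by blast
    show "\<exists>X\<in>E. x \<in> X"
    proof (cases "e = e1")
      case True
      have "x \<noteq> v2" using x v2nV1 by blast
      then have "x \<in> (e1 \<union> e2) - {v1, v2}" using x e True by blast
      then have "x \<in> es" by (rule UnI1)
      then show ?thesis by (rule bexI[OF _ es_in])
    next
      case False
      then have "m ` e \<in> E" using img1_in e by blast
      moreover have "m x = x" using m1 x by simp
      ultimately show ?thesis using e by (metis imageI)
    qed
  qed
  obtain e where e: "e \<in> E1 - {e1}" "v1 \<in> e" using o by blast
  have "m ` e \<in> E" by (rule img1_in[OF e(1)])
  moreover have "m v1 = vs" using m1 v1V1 by simp
  ultimately show "\<exists>X\<in>E. vs \<in> X" using e by (metis imageI)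
qed

lemma pull:
  assumes h: "cf h V F k" and F1: "\<forall>e\<in>F1. m ` e \<in> F" and sub: "F1 \<subseteq> E1"
  shows "cf (h \<circ> m) V1 F1 k"
  unfolding cf_def
proof (intro conjI ballI)
  fix x assume "x \<in> V1" then show "(h \<circ> m) x < k" using h mV1 unfolding cf_def by auto
next
  fix e assume "e \<in> F1"
  then have "nm h (m ` e)" using h F1 unfolding cf_def by auto
  then show "nm (h \<circ> m) e" unfolding nm_def by auto
qed

lemma notcolA:
  assumes "colorable V E k" shows "colorable V1 E1 k \<or> colorable V2 E2 k"
proof (rule ccontr)
  assume n: "\<not> (colorable V1 E1 k \<or> colorable V2 E2 k)"
  obtain h where h: "cf h V E k" using assms colorable_cf by blast
  have s1: "\<forall>e\<in>E1 - {e1}. m ` e \<in> E" using img1_in by blast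
  have s2: "\<forall>e\<in>E2 - {e2}. hajos_merge v2 v1 vs ` e \<in> E" using hj.img1_in[OF sym] by blast
  have p1: "cf (h \<circ> m) V1 (E1 - {e1}) k" using pull[OF h s1] by blast
  have p2: "cf (h \<circ> m) V2 (E2 - {e2}) k" using hj.pull[OF sym h s2] unfolding ms by blast
  have "\<not> nm (h \<circ> m) e1"
  proof
    assume "nm (h \<circ> m) e1"
    then have "cf (h \<circ> m) V1 E1 k" using p1 unfolding cf_def by blast
    then show False using n colorable_cf by blast
  qed
  then have a1: "\<forall>x\<in>e1 - {v1}. h x = h vs"
  proof (intro ballI)
    fix x assume nn: "\<not> nm (h \<circ> m) e1" and x: "x \<in> e1 - {v1}"
    have "(h \<circ> m) x = (h \<circ> m) v1" using mono_of_not_nm[OF nn _ v1e1] x by blast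
    moreover have "m x = x" using m1 x e1V1 by auto
    moreover have "m v1 = vs" using m1 v1V1 by auto
    ultimately show "h x = h vs" by simp
  qed
  have "\<not> nm (h \<circ> m) e2"
  proof
    assume "nm (h \<circ> m) e2"
    then have "cf (h \<circ> m) V2 E2 k" using p2 unfolding cf_def by blast
    then show False using n colorable_cf by blast
  qed
  then have a2: "\<forall>x\<in>e2 - {v2}. h x = h vs"
  proof (intro ballI)
    fix x assume nn: "\<not> nm (h \<circ> m) e2" and x: "x \<in> e2 - {v2}"
    have "(h \<circ> m) x = (h \<circ> m) v2" using mono_of_not_nm[OF nn _ v2e2] x by blast
    moreover have "m x = x" using m2 x e2V2 by auto
    moreover have "m v2 = vs" using m2 v2V2 by auto
    ultimately show "h x = h vs" by simp
  qed
  have "nm h es" using h es_in unfolding cf_def by blast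
  then obtain u w where uw: "u \<in> es" "w \<in> es" "h u \<noteq> h w" unfolding nm_def by blast
  have all: "h x = h vs" if xe: "x \<in> es" for x
  proof (cases "x = vs")
    case True then show ?thesis by simp
  next
    case False
    then have "x \<in> (e1 \<union> e2) - {v1, v2}" using xe by (cases b) simp_all
    then have "x \<in> e1 - {v1} \<or> x \<in> e2 - {v2}" by blast
    then show ?thesis using a1 a2 by blast
  qed
  show False using all[OF uw(1)] all[OF uw(2)] uw(3) by simp
qed

lemma es_sym: "((e2 \<union> e1) - {v2, v1}) \<union> (if b then {vs} else {}) = es"
proof -
  have "e2 \<union> e1 = e1 \<union> e2" "{v2, v1} = {v1, v2}" by (rule Un_commute, rule insert_commute)
  then show ?thesis by (simp only:)
qed

lemma pull_star:
  assumes c: "colorable V (E - {X}) k" and X: "X \<notin> image m ` (E1 - {e1})"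
  shows "colorable V1 (E1 - {e1}) k"
proof -
  obtain h where h: "cf h V (E - {X}) k" using c colorable_cf by blast
  have "\<forall>e\<in>E1 - {e1}. m ` e \<in> E - {X}" using img1_in X by blast
  then have "cf (h \<circ> m) V1 (E1 - {e1}) k" using pull[OF h] by blast
  then show ?thesis using colorable_cf by blast
qed

lemma comb3:
  assumes k: "k \<ge> 3" and c1: "colorable V1 E1 k" and c2: "colorable V2 (E2 - {e2}) k"
  shows "colorable V E k"
proof -
  obtain g where g: "cf g V1 E1 k" using c1 colorable_cf by blast
  obtain f2 where f2: "cf f2 V2 (E2 - {e2}) k" using c2 colorable_cf by blast
  have "nm g e1" using g e1 unfolding cf_def by blast
  then obtain x where x: "x \<in> e1" "x \<noteq> v1" "g x \<noteq> g v1" using nm_other[OF _ v1e1] by blast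
  have gxk: "g x < k" using g x(1) e1V1 unfolding cf_def by blast
  have gvk: "g v1 < k" using g v1V1 unfolding cf_def by blast
  define f2a where "f2a = sw (f2 v2) (g v1) \<circ> f2"
  have a: "cf f2a V2 (E2 - {e2}) k" "f2a v2 = g v1" using align[OF f2 g] unfolding f2a_def by blast+
  obtain y where y: "y \<in> e2" "y \<noteq> v2" using ex_other2 by blast
  obtain f2' where f2': "cf f2' V2 (E2 - {e2}) k" "f2' v2 = g v1" "f2' y \<noteq> g x"
  proof (cases "f2a y = g x")
    case False then show ?thesis using that a by blast
  next
    case True
    define d where "d = (if 0 \<noteq> g x \<and> 0 \<noteq> g v1 then 0 else if 1 \<noteq> g x \<and> 1 \<noteq> g v1 then 1 else (2::nat))"
    have d: "d < k" "d \<noteq> g x" "d \<noteq> g v1" using k x(3) unfolding d_def by auto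
    have "cf (sw (g x) d \<circ> f2a) V2 (E2 - {e2}) k" by (rule cf_sw[OF a(1) gxk d(1)])
    moreover have "(sw (g x) d \<circ> f2a) v2 = g v1" using a(2) d x(3) unfolding sw_def by simp
    moreover have "(sw (g x) d \<circ> f2a) y \<noteq> g x" using True d unfolding sw_def by simp
    ultimately show ?thesis by (rule that)
  qed
  have ex: "\<exists>x\<in>e1-{v1}. \<exists>y\<in>e2-{v2}. g x \<noteq> f2' y" using x y f2'(3) by (metis DiffI singletonD)
  obtain f where f: "\<forall>x\<in>V. f x < k" "\<forall>e\<in>E1. nm f (m ` e)" "\<forall>e\<in>E2 - {e2}. nm f (m ` e)"
     "(\<exists>x\<in>e1-{v1}. \<exists>y\<in>e2-{v2}. g x \<noteq> f2' y) \<longrightarrow> nm f es"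
    by (rule comb[OF g f2'(1) f2'(2) order_refl Diff_subset])
  have fes: "nm f es" using f(4) ex by (rule mp)
  have "cf f V E k"
  proof (rule cf_from_cases)
    show "\<forall>x\<in>V. f x < k" by (rule f(1))
  next
    fix e assume "e \<in> E1 - {e1}" then show "nm f (m ` e)" using f(2) by blast
  next
    fix e assume "e \<in> E2 - {e2}" then show "nm f (m ` e)" using f(3) by blast
  next
    show "nm f es" by (rule fes)
  qed
  then show ?thesis using colorable_cf by blast
qed

lemma img_distinct:
  assumes e: "e \<in> E1" and e': "e' \<in> E2"
  shows "m ` e \<noteq> m ` e'"
proof
  assume eq: "m ` e = m ` e'"
  obtain x where x: "x \<in> e" "x \<noteq> v1" using other_in[OF conjunct2[OF edge1[OF e]], of v1] by blast
  have xV: "x \<in> V1" using x(1) edge1[OF e] by blast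
  have mx: "m x = x" using m1[OF xV] x(2) by simp
  have "x \<in> m ` e'" using eq x(1) mx by (metis imageI)
  then obtain y where y: "y \<in> e'" "x = m y" by blast
  have yV: "y \<in> V2" using y(1) edge2[OF e'] by blast
  show False
  proof (cases "y = v2")
    case True
    then have "x = vs" using y(2) m2[OF yV] by simp
    then show False using vsn xV x(2) by blast
  next
    case False
    then have "x = y" using y(2) m2[OF yV] by simp
    then show False using xV yV disj by blast
  qed
qed

lemma notcol1:
  assumes k: "k \<ge> 3" and nG: "\<not> colorable V E k" and c: "colorable V (E - {es}) k"
  shows "\<not> colorable V1 E1 k"
proof
  assume c1: "colorable V1 E1 k"
  have "es \<notin> image (hajos_merge v2 v1 vs) ` (E2 - {e2})"
    using hj.es_not1[OF sym] unfolding es_sym .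
  then have "colorable V2 (E2 - {e2}) k" using hj.pull_star[OF sym] c by blast
  then show False using comb3[OF k c1] nG by blast
qed

lemma del1_pull:
  assumes e: "e \<in> E1" "e \<noteq> e1" and c: "colorable V (E - {m ` e}) k" and n2: "\<not> colorable V2 E2 k"
  shows "colorable V1 (E1 - {e}) k"
proof -
  obtain h where h: "cf h V (E - {m ` e}) k" using c colorable_cf by blast
  have s1: "\<forall>e'\<in>E1 - {e1} - {e}. m ` e' \<in> E - {m ` e}"
  proof
    fix e' assume e': "e' \<in> E1 - {e1} - {e}"
    have "m ` e' \<noteq> m ` e"
    proof
      assume "m ` e' = m ` e"
      moreover have "e' \<subseteq> V1" "e \<subseteq> V1" using edge1 e' e by blast+
      ultimately have "e' = e" using inj_on_image_eq_iff[OF inj_m] by blast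
      then show False using e' by blast
    qed
    then show "m ` e' \<in> E - {m ` e}" using img1_in e' by blast
  qed
  have p1: "cf (h \<circ> m) V1 (E1 - {e1} - {e}) k" using pull[OF h s1] by blast
  have s2: "\<forall>e'\<in>E2 - {e2}. hajos_merge v2 v1 vs ` e' \<in> E - {m ` e}"
  proof
    fix e' assume e': "e' \<in> E2 - {e2}"
    have "m ` e \<noteq> m ` e'" using img_distinct e e' by blast
    then show "hajos_merge v2 v1 vs ` e' \<in> E - {m ` e}" using hj.img1_in[OF sym e'] unfolding ms by blast
  qed
  have p2: "cf (h \<circ> m) V2 (E2 - {e2}) k" using hj.pull[OF sym h s2] unfolding ms by blast
  have "es \<noteq> m ` e" using es_not1 e by blast
  then have "es \<in> E - {m ` e}" using es_in by blast
  then have hes: "nm h es" using h unfolding cf_def by blast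
  show ?thesis
  proof (cases "nm (h \<circ> m) e1")
    case True
    have "cf (h \<circ> m) V1 (E1 - {e}) k" unfolding cf_def
    proof (intro conjI ballI)
      fix x assume "x \<in> V1" then show "(h \<circ> m) x < k" using p1 unfolding cf_def by blast
    next
      fix e' assume "e' \<in> E1 - {e}"
      then show "nm (h \<circ> m) e'" using p1 True unfolding cf_def by (cases "e' = e1") blast+
    qed
    then show ?thesis using colorable_cf by blast
  next
    case False
    have a1: "\<forall>x\<in>e1 - {v1}. h x = h vs"
    proof
      fix x assume x: "x \<in> e1 - {v1}"
      have "(h \<circ> m) x = (h \<circ> m) v1" using mono_of_not_nm[OF False _ v1e1] x by blast
      moreover have "m x = x" using m1 x e1V1 by auto
      moreover have "m v1 = vs" using m1 v1V1 by auto
      ultimately show "h x = h vs" by simp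
    qed
    obtain u w where uw: "u \<in> es" "w \<in> es" "h u \<noteq> h w" using hes unfolding nm_def by blast
    obtain z where z: "z \<in> es" "h z \<noteq> h vs"
    proof (cases "h u = h vs")
      case True then show ?thesis using that uw by simp
    next
      case False then show ?thesis using that uw by blast
    qed
    have "z \<noteq> vs" using z(2) by blast
    then have "z \<in> (e1 \<union> e2) - {v1, v2}" using z(1) by (cases b) simp_all
    moreover have "z \<notin> e1 - {v1}" using a1 z(2) by blast
    ultimately have zz: "z \<in> e2" "z \<noteq> v2" by blast+
    have zV: "z \<in> V2" using zz(1) e2V2 by blast
    have "(h \<circ> m) z \<noteq> (h \<circ> m) v2" using m2[OF zV] m2[OF v2V2] zz(2) z(2) by simp
    then have "nm (h \<circ> m) e2" unfolding nm_def using zz(1) v2e2 by blast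
    then have "cf (h \<circ> m) V2 E2 k" using p2 unfolding cf_def by blast
    then show ?thesis using n2 colorable_cf by blast
  qed
qed

lemma cover_back:
  assumes cG: "\<forall>x\<in>V. \<exists>X\<in>E. x \<in> X"
  shows "\<forall>v\<in>V1. \<exists>e\<in>E1. v \<in> e"
proof
  fix x assume xV: "x \<in> V1"
  show "\<exists>e\<in>E1. x \<in> e"
  proof (cases "x = v1")
    case True then show ?thesis using e1 v1e1 by blast
  next
    case False
    have xv2: "x \<noteq> v2" using xV v2nV1 by blast
    have xvs: "x \<noteq> vs" using vsn xV False by blast
    have "x \<in> V" using V_eq xV False xv2 by blast
    then obtain X where X: "X \<in> E" "x \<in> X" using cG by blast
    from edge_cases[OF X(1)] show ?thesis
    proof (elim disjE bexE)
      fix e assume e: "e \<in> E1 - {e1}" "X = m ` e"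
      then obtain u where u: "u \<in> e" "x = m u" using X(2) by blast
      have uV: "u \<in> V1" using u(1) e(1) edge1 by blast
      have "u \<noteq> v1" using u(2) m1[OF uV] xvs by (cases "u = v1") simp_all
      then have "x = u" using u(2) m1[OF uV] by simp
      then show ?thesis using u(1) e(1) by blast
    next
      fix e assume e: "e \<in> E2 - {e2}" "X = m ` e"
      then obtain u where u: "u \<in> e" "x = m u" using X(2) by blast
      have uV: "u \<in> V2" using u(1) e(1) edge2 by blast
      have "u \<noteq> v2" using u(2) m2[OF uV] xvs by (cases "u = v2") simp_all
      then have "x = u" using u(2) m2[OF uV] by simp
      then show ?thesis using uV xV disj by blast
    next
      assume "X = es"
      then have "x \<in> (e1 \<union> e2) - {v1, v2}" using X(2) xvs by (cases b) simp_all
      moreover have "x \<notin> e2" using xV disj e2V2 by blast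
      ultimately show ?thesis using e1 by blast
    qed
  qed
qed

lemma partA:
  assumes k: "k \<ge> 2" and C1: "critical (k+1) V1 E1" and C2: "critical (k+1) V2 E2"
  shows "critical (k+1) V E"
proof -
  have k1: "k \<ge> 1" using k by simp
  note C1' = crit_iff[OF k1, THEN iffD1, OF C1]
  note C2' = crit_iff[OF k1, THEN iffD1, OF C2]
  have n1: "\<not> colorable V1 E1 k" by (rule conjunct1[OF conjunct2[OF C1']])
  have d1': "\<forall>e\<in>E1. colorable V1 (E1 - {e}) k" by (rule conjunct1[OF conjunct2[OF conjunct2[OF C1']]])
  have c1: "\<forall>v\<in>V1. \<exists>e\<in>E1. v \<in> e" by (rule conjunct2[OF conjunct2[OF conjunct2[OF C1']]])
  have n2: "\<not> colorable V2 E2 k" by (rule conjunct1[OF conjunct2[OF C2']])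
  have d2': "\<forall>e\<in>E2. colorable V2 (E2 - {e}) k" by (rule conjunct1[OF conjunct2[OF conjunct2[OF C2']]])
  have c2: "\<forall>v\<in>V2. \<exists>e\<in>E2. v \<in> e" by (rule conjunct2[OF conjunct2[OF conjunct2[OF C2']]])
  have d1: "colorable V1 (E1 - {e}) k" if "e \<in> E1" for e using d1' that by (rule bspec)
  have d2: "colorable V2 (E2 - {e}) k" if "e \<in> E2" for e using d2' that by (rule bspec)
  have nG: "\<not> colorable V E k" using notcolA n1 n2 by blast
  have dG: "\<forall>X\<in>E. colorable V (E - {X}) k"
  proof
    fix X assume X: "X \<in> E"
    from edge_cases[OF X] show "colorable V (E - {X}) k"
    proof (elim disjE bexE)
      fix e assume e: "e \<in> E1 - {e1}" "X = m ` e"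
      show ?thesis unfolding e(2) using del1[OF _ _ d1 d2[OF e2] n2] e(1) by blast
    next
      fix e assume e: "e \<in> E2 - {e2}" "X = m ` e"
      have "colorable V (E - {hajos_merge v2 v1 vs ` e}) k"
        using hj.del1[OF sym _ _ d2 d1[OF e1] n1] e(1) by blast
      then show ?thesis unfolding e(2) ms .
    next
      assume "X = es"
      then show ?thesis using del_star[OF d1[OF e1] d2[OF e2]] by simp
    qed
  qed
  have o1: "\<exists>e\<in>E1 - {e1}. v1 \<in> e" using v1_other[OF k n1 d1[OF e1]] .
  have o2: "\<exists>e\<in>E2 - {e2}. v2 \<in> e" using hj.v1_other[OF sym k n2 d2[OF e2]] .
  have cv1: "\<forall>x\<in>V1-{v1}. \<exists>X\<in>E. x \<in> X" "\<exists>X\<in>E. vs \<in> X" using cover[OF c1 o1] by blast+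
  have cv2: "\<forall>x\<in>V2-{v2}. \<exists>X\<in>E. x \<in> X" using hj.cover(1)[OF sym c2 o2] by blast
  have cG: "\<forall>x\<in>V. \<exists>X\<in>E. x \<in> X"
  proof
    fix x assume "x \<in> V"
    then have "x \<in> V1 - {v1} \<or> x \<in> V2 - {v2} \<or> x = vs" using V_eq by blast
    then show "\<exists>X\<in>E. x \<in> X" using cv1 cv2 by blast
  qed
  have "hypergraph V E \<and> \<not> colorable V E k \<and> (\<forall>e\<in>E. colorable V (E - {e}) k) \<and> (\<forall>v\<in>V. \<exists>e\<in>E. v \<in> e)"
    using hyp_join nG dG cG by (intro conjI)
  from crit_iff[OF k1, THEN iffD2, OF this] show ?thesis .
qed

lemma partB:
  assumes k: "k \<ge> 3" and C: "critical (k+1) V E"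
  shows "critical (k+1) V1 E1"
proof -
  have k1: "k \<ge> 1" using k by simp
  note C' = crit_iff[OF k1, THEN iffD1, OF C]
  have nG: "\<not> colorable V E k" by (rule conjunct1[OF conjunct2[OF C']])
  have dG': "\<forall>e\<in>E. colorable V (E - {e}) k" by (rule conjunct1[OF conjunct2[OF conjunct2[OF C']]])
  have cG: "\<forall>x\<in>V. \<exists>X\<in>E. x \<in> X" by (rule conjunct2[OF conjunct2[OF conjunct2[OF C']]])
  have dG: "colorable V (E - {X}) k" if "X \<in> E" for X using dG' that by (rule bspec)
  have dstar: "colorable V (E - {es}) k" using dG es_in by blast
  have n1: "\<not> colorable V1 E1 k" by (rule notcol1[OF k nG dstar])
  have dstar': "colorable V (E - {((e2 \<union> e1) - {v2, v1}) \<union> (if b then {vs} else {})}) k"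
    unfolding es_sym by (rule dstar)
  have n2: "\<not> colorable V2 E2 k" by (rule hj.notcol1[OF sym k nG dstar'])
  have d1: "\<forall>e\<in>E1. colorable V1 (E1 - {e}) k"
  proof
    fix e assume e: "e \<in> E1"
    show "colorable V1 (E1 - {e}) k"
    proof (cases "e = e1")
      case True
      then show ?thesis using pull_star[OF dstar es_not1] by simp
    next
      case False
      have "m ` e \<in> E" using img1_in e False by blast
      then show ?thesis using del1_pull[OF e False dG n2] by blast
    qed
  qed
  have c1: "\<forall>v\<in>V1. \<exists>e\<in>E1. v \<in> e" by (rule cover_back[OF cG])
  have "hypergraph V1 E1 \<and> \<not> colorable V1 E1 k \<and> (\<forall>e\<in>E1. colorable V1 (E1 - {e}) k) \<and> (\<forall>v\<in>V1. \<exists>e\<in>E1. v \<in> e)"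
    using h1 n1 d1 c1 by (intro conjI)
  from crit_iff[OF k1, THEN iffD2, OF this] show ?thesis .
qed


end


theorem theorem9:
  fixes V1 V2 :: "'a set" and E1 E2 :: "'a set set" and v1 v2 vs :: 'a
    and e1 e2 :: "'a set" and b :: bool and k :: nat and V :: "'a set" and E :: "'a set set"
  assumes "hypergraph V1 E1" and "hypergraph V2 E2" and "V1 \<inter> V2 = {}"
    and "e1 \<in> E1" and "v1 \<in> e1" and "e2 \<in> E2" and "v2 \<in> e2"
    and "vs \<notin> (V1 - {v1}) \<union> (V2 - {v2})"
    and "(V, E) = hajos_join V1 E1 v1 e1 V2 E2 v2 e2 vs b"
    and "k \<ge> 2"
  shows "(critical (k + 1) V1 E1 \<and> critical (k + 1) V2 E2 \<longrightarrow> critical (k + 1) V E)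
       \<and> (critical (k + 1) V E \<and> k \<ge> 3 \<longrightarrow> critical (k + 1) V1 E1 \<and> critical (k + 1) V2 E2)"
  proof -
  interpret H: hj V1 E1 v1 e1 V2 E2 v2 e2 vs b V E by (rule hj.intro[OF assms(1-9)])
  have k: "k \<ge> 2" by (rule assms(10))
  show ?thesis
  proof (rule conjI; rule impI)
    assume a: "critical (k + 1) V1 E1 \<and> critical (k + 1) V2 E2"
    show "critical (k + 1) V E" by (rule H.partA[OF k conjunct1[OF a] conjunct2[OF a]])
  next
    assume a: "critical (k + 1) V E \<and> k \<ge> 3"
    have c1: "critical (k + 1) V1 E1" by (rule H.partB[OF conjunct2[OF a] conjunct1[OF a]])
    have c2: "critical (k + 1) V2 E2" by (rule hj.partB[OF H.sym conjunct2[OF a] conjunct1[OF a]])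
    show "critical (k + 1) V1 E1 \<and> critical (k + 1) V2 E2" using c1 c2 by (rule conjI)
  qed
qed

end
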